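(* Let $\mathcal{G}_{55}$ be the network described in the context, with nodes $(i,j)$, $1\le i,j\le5$. Let $X$ be the set of nodes $\{(1,1),(2,2),(3,3),(4,4),(5,5),(1,4),(2,1),(3,5),(4,3),(5,2)\}$, and let $K$ be the 2-coloring in which nodes in $X$ have one color and all other 15 nodes have a second color. Then $K$ is balanced, but $K$ is not an orbit coloring for $\mathbb{S}_5\times\mathbb{S}_5$, i.e. there is no subgroup $\Sigma\subseteq\mathbb{S}_5\times\mathbb{S}_5$ whose orbits on the nodes are exactly the two color classes of $K$.
   Context: For integers $m,n\ge1$, the network $\mathcal{G}_{mn}$ has node set $\{(i,j):1\le i\le m,\ 1\le j\le n\}$ ($i$ indexes rows, $j$ columns), all nodes of the same type. For each ordered pair of distinct nodes $(c,d)$ there is exactly one arrow with head $c$ and tail $d$, whose type is: "row" if $c,d$ lie in the same row, "column" if they lie in the same column, "diagonal" otherwise; in addition each node has an internal arrow from itself to itself (a fourth type). The group $\mathbb{S}_m\times\mathbb{S}_n$ acts on the nodes by $(\sigma,\tau)\cdot(i,j)=(\sigma(i),\tau(j))$; it is the symmetry group of $\mathcal{G}_{mn}$. A coloring is a map from nodes to a set of colors (identified up to the partition it induces). A coloring is balanced if whenever nodes $c,d$ have the same color, for every arrow type and every color $k$ the number of input arrows of that type to $c$ with tail of color $k$ equals the corresponding number for $d$. For a subgroup $\Sigma$ of the symmetry group, the orbit coloring of $\Sigma$ has as color classes the $\Sigma$-orbits on nodes; a coloring is an orbit coloring if it is the orbit coloring of some such subgroup. *)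

theory Defs
  imports "HOL-Algebra.Sym_Groups"
begin

definition nodes :: "nat \<Rightarrow> nat \<Rightarrow> (nat \<times> nat) set" where
  "nodes m n = {1..m} \<times> {1..n}"

datatype arrow_type = RowArrow | ColumnArrow | DiagonalArrow | InternalArrow

(* type of the unique arrow with head c and tail d *)
definition arrow_type_of :: "nat \<times> nat \<Rightarrow> nat \<times> nat \<Rightarrow> arrow_type" where
  "arrow_type_of c d =
     (if c = d then InternalArrow
      else if fst c = fst d then RowArrow
      else if snd c = snd d then ColumnArrow
      else DiagonalArrow)"

definition input_count ::
  "nat \<Rightarrow> nat \<Rightarrow> (nat \<times> nat \<Rightarrow> 'c) \<Rightarrow> nat \<times> nat \<Rightarrow> arrow_type \<Rightarrow> 'c \<Rightarrow> nat" where
  "input_count m n col c t k = card {d \<in> nodes m n. arrow_type_of c d = t \<and> col d = k}"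

definition balanced :: "nat \<Rightarrow> nat \<Rightarrow> (nat \<times> nat \<Rightarrow> 'c) \<Rightarrow> bool" where
  "balanced m n col \<longleftrightarrow>
     (\<forall>c\<in>nodes m n. \<forall>d\<in>nodes m n. col c = col d \<longrightarrow>
        (\<forall>t k. input_count m n col c t k = input_count m n col d t k))"

abbreviation sym_group_mn :: "nat \<Rightarrow> nat \<Rightarrow> ((nat \<Rightarrow> nat) \<times> (nat \<Rightarrow> nat)) monoid" where
  "sym_group_mn m n \<equiv> sym_group m \<times>\<times> sym_group n"

definition node_act :: "(nat \<Rightarrow> nat) \<times> (nat \<Rightarrow> nat) \<Rightarrow> nat \<times> nat \<Rightarrow> nat \<times> nat" where
  "node_act g c = (fst g (fst c), snd g (snd c))"

definition node_orbit :: "((nat \<Rightarrow> nat) \<times> (nat \<Rightarrow> nat)) set \<Rightarrow> nat \<times> nat \<Rightarrow> (nat \<times> nat) set" where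
  "node_orbit \<Sigma> c = (\<lambda>g. node_act g c) ` \<Sigma>"

definition is_orbit_coloring :: "nat \<Rightarrow> nat \<Rightarrow> (nat \<times> nat \<Rightarrow> 'c) \<Rightarrow> bool" where
  "is_orbit_coloring m n col \<longleftrightarrow>
     (\<exists>\<Sigma>. subgroup \<Sigma> (sym_group_mn m n) \<and>
        (\<forall>c\<in>nodes m n. \<forall>d\<in>nodes m n. (col c = col d \<longleftrightarrow> d \<in> node_orbit \<Sigma> c)))"

definition X55 :: "(nat \<times> nat) set" where
  "X55 = {(1,1),(2,2),(3,3),(4,4),(5,5),(1,4),(2,1),(3,5),(4,3),(5,2)}"

end

theory Submission
  imports Defs
begin

definition L55 :: "(nat \<times> nat) list" where
  "L55 = [(i,j). i <- [1..<6], j <- [1..<6]]"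

definition Fc :: "bool \<Rightarrow> arrow_type \<Rightarrow> bool \<Rightarrow> nat" where
  "Fc b t k = (case t of InternalArrow \<Rightarrow> (if k = b then 1 else 0)
     | RowArrow \<Rightarrow> (if b then (if k then 1 else 3) else 2)
     | ColumnArrow \<Rightarrow> (if b then (if k then 1 else 3) else 2)
     | DiagonalArrow \<Rightarrow> (if b then (if k then 7 else 9) else (if k then 6 else 10)))"

lemma nodes55: "nodes 5 5 = set L55"
  unfolding nodes_def L55_def by (auto simp: atLeastAtMost_upt)

lemma distL: "distinct L55" unfolding L55_def by code_simp

lemma comp: "\<forall>c\<in>set L55. \<forall>t\<in>set [RowArrow, ColumnArrow, DiagonalArrow, InternalArrow].
  \<forall>k\<in>set [True,False]. length (filter (\<lambda>d. arrow_type_of c d = t \<and> (d\<in>X55) = k) L55) = Fc (c\<in>X55) t k"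
  unfolding L55_def X55_def Fc_def arrow_type_of_def by code_simp

lemma ic: assumes "c \<in> nodes 5 5"
  shows "input_count 5 5 (\<lambda>c. c \<in> X55) c t k = Fc (c\<in>X55) t k"
proof -
  have "input_count 5 5 (\<lambda>c. c \<in> X55) c t k = length (filter (\<lambda>d. arrow_type_of c d = t \<and> (d\<in>X55) = k) L55)"
    unfolding input_count_def nodes55 set_filter[symmetric]
    by (rule distinct_card[OF distinct_filter[OF distL]])
  also have "\<dots> = Fc (c\<in>X55) t k"
  proof -
    have cL: "c \<in> set L55" using assms unfolding nodes55 .
    have tL: "t \<in> set [RowArrow, ColumnArrow, DiagonalArrow, InternalArrow]" by (cases t) simp_all
    have kL: "k \<in> set [True,False]" by simp
    show ?thesis using bspec[OF bspec[OF bspec[OF comp cL] tL] kL] .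
  qed
  finally show ?thesis .
qed

lemma bal: "balanced 5 5 (\<lambda>c. c \<in> X55)"
  unfolding balanced_def using ic by simp

definition PP :: "nat \<times> nat \<Rightarrow> bool" where
  "PP d = (\<exists>a b. (fst d,a)\<in>X55 \<and> (b,a)\<in>X55 \<and> (b, snd d)\<in>X55)"

lemma notorb: "\<not> is_orbit_coloring 5 5 (\<lambda>c. c \<in> X55)"
proof
  assume "is_orbit_coloring 5 5 (\<lambda>c. c \<in> X55)"
  then obtain S where sg: "subgroup S (sym_group_mn 5 5)" and
    H: "\<forall>c\<in>nodes 5 5. \<forall>d\<in>nodes 5 5. ((c \<in> X55) = (d \<in> X55) \<longleftrightarrow> d \<in> node_orbit S c)"
    unfolding is_orbit_coloring_def by blast
  have n1: "(1,2) \<in> nodes 5 5" "(1,5) \<in> nodes 5 5" unfolding nodes_def by auto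
  have n2: "(1,2) \<notin> X55" "(1,5) \<notin> X55" unfolding X55_def by auto
  have "(1,5) \<in> node_orbit S (1,2)" using H n1 n2 by blast
  then obtain g where g: "g \<in> S" and e: "(1,5) = node_act g (1,2)" unfolding node_orbit_def by auto
  have gc: "g \<in> carrier (sym_group_mn 5 5)" using sg g subgroup.subset by blast
  then have p1: "fst g permutes {1..5}" and p2: "snd g permutes {1..5}"
    by (auto simp: sym_group_def)
  have XN: "X55 \<subseteq> nodes 5 5" unfolding X55_def nodes_def by auto
  have pres: "node_act g x \<in> X55" if x: "x \<in> X55" for x
  proof -
    have xn: "x \<in> nodes 5 5" using x XN by auto
    have a1: "fst x \<in> {1..5}" "snd x \<in> {1..5}" using xn unfolding nodes_def by (auto simp del: atLeastAtMost_iff)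
    have "fst g (fst x) \<in> {1..5}" using permutes_in_image[OF p1] a1(1) by blast
    moreover have "snd g (snd x) \<in> {1..5}" using permutes_in_image[OF p2] a1(2) by blast
    ultimately have nn: "node_act g x \<in> nodes 5 5" unfolding nodes_def node_act_def by blast
    have "node_act g x \<in> node_orbit S x" using g unfolding node_orbit_def by blast
    then show ?thesis using H[rule_format, OF xn nn] x by simp
  qed
  have "PP (1,2)" unfolding PP_def
    by (rule exI[of _ 1], rule exI[of _ 2]) (simp add: X55_def)
  then obtain a b where ab: "(1,a)\<in>X55" "(b,a)\<in>X55" "(b,2)\<in>X55" unfolding PP_def by auto
  have pg: "PP (node_act g (1,2))" unfolding PP_def
    using pres[OF ab(1)] pres[OF ab(2)] pres[OF ab(3)] by (auto simp: node_act_def)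
  have "PP (1,5)" using pg by (simp only: e[symmetric])
  moreover have "\<not> PP (1,5)"
  proof
    assume "PP (1,5)"
    then obtain a b where q: "(1,a)\<in>X55" "(b,a)\<in>X55" "(b,5)\<in>X55" unfolding PP_def by auto
    from q(1) have "a = 1 \<or> a = 4" unfolding X55_def by simp
    moreover from q(3) have "b = 3 \<or> b = 5" unfolding X55_def by auto
    ultimately show False using q(2) by (elim disjE) (simp_all add: X55_def)
  qed
  ultimately show False by blast
qed

theorem mainTheorem3:
  shows "balanced 5 5 (\<lambda>c. c \<in> X55) \<and> \<not> is_orbit_coloring 5 5 (\<lambda>c. c \<in> X55)"
  using bal notorb by blast

end
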